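(* Let $n\ge 3$ and $\mathcal F=\{\{1,2\},\{2,3\},\dots,\{n-1,n\},\{n,1\}\}$. Then the building closure of $\mathcal F$ is $\mathrm{Con}(C_n)$, and $\mathcal F$ is tight. Consequently, in the description $$\Delta_{\mathcal F}=\sum_{i=1}^n[e_i,e_{i+1}]=\{x:\phi_{[n]}(x)=n,\ \phi_X(x)\ge|\mathcal F_X|\ \forall X\in\mathrm{Con}(C_n)\}$$ (with $e_{n+1}:=e_1$) all inequalities for $X\in\mathrm{Con}(C_n)\setminus\{[n]\}$ are irredundant.
   Context: $\mathrm{Con}(C_n)$ is the family of subsets of $[n]$ inducing connected subgraphs of the cycle graph $C_n$, i.e. $[n]$ together with all nonempty proper cyclic intervals $\{i,i+1,\dots,j\}$ (indices mod $n$); the nestohedron $\Delta_{\mathrm{Con}(C_n)}$ is the cyclohedron $W_n$. A building set on $[n]$ is a family of nonempty subsets containing all singletons and closed under unions of intersecting members; the building closure of $\mathcal F$ is the minimal building set containing it. $\mathcal F_X=\{F\in\mathcal F:F\subseteq X\}$, $\phi_X(x)=\sum_{i\in X}x_i$, $\Delta_F=\mathrm{Conv}\{e_i:i\in F\}$, $\Delta_{\mathcal F}=\sum_{F\in\mathcal F}\Delta_F$. A connected hypergraph $\mathcal F$ is tight if each inequality $\phi_X(x)\ge|\mathcal F_X|$, $X\in\widehat{\mathcal F}\setminus\{[n]\}$, in the description $\Delta_{\mathcal F}=\{x:\phi_{[n]}(x)=|\mathcal F|,\ \phi_X(x)\ge|\mathcal F_X|\ \forall X\in\widehat{\mathcal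 F}\}$ is irredundant. *)

theory Defs
  imports Complex_Main
begin

text \<open>Points of R^n are modelled as functions nat => real that vanish outside {1..n}.\<close>

definition phi :: "nat set \<Rightarrow> (nat \<Rightarrow> real) \<Rightarrow> real" where
  "phi X x = (\<Sum>i\<in>X. x i)"

definition std_basis :: "nat \<Rightarrow> nat \<Rightarrow> real" where
  "std_basis i = (\<lambda>j. if j = i then 1 else 0)"

definition simplex :: "nat set \<Rightarrow> (nat \<Rightarrow> real) set" where
  "simplex F = {x. \<exists>c :: nat \<Rightarrow> real. (\<forall>i\<in>F. c i \<ge> 0) \<and> (\<Sum>i\<in>F. c i) = 1
                   \<and> x = (\<lambda>j. \<Sum>i\<in>F. c i * std_basis i j)}"

definition nestohedron :: "nat set set \<Rightarrow> (nat \<Rightarrow> real) set" where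
  "nestohedron \<F> = {x. \<exists>y :: nat set \<Rightarrow> nat \<Rightarrow> real.
      (\<forall>F\<in>\<F>. y F \<in> simplex F) \<and> x = (\<lambda>j. \<Sum>F\<in>\<F>. y F j)}"

definition restr :: "nat set set \<Rightarrow> nat set \<Rightarrow> nat set set" where
  "restr \<F> X = {F\<in>\<F>. F \<subseteq> X}"

definition polyh :: "nat \<Rightarrow> nat set set \<Rightarrow> nat set set \<Rightarrow> (nat \<Rightarrow> real) set" where
  "polyh n \<F> S = {x. (\<forall>j. j \<notin> {1..n} \<longrightarrow> x j = 0)
      \<and> phi {1..n} x = real (card \<F>)
      \<and> (\<forall>X\<in>S. phi X x \<ge> real (card (restr \<F> X)))}"

definition building_set :: "nat \<Rightarrow> nat set set \<Rightarrow> bool" where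
  "building_set n B \<longleftrightarrow> (\<forall>F\<in>B. F \<noteq> {} \<and> F \<subseteq> {1..n})
      \<and> (\<forall>i\<in>{1..n}. {i} \<in> B)
      \<and> (\<forall>F\<in>B. \<forall>G\<in>B. F \<inter> G \<noteq> {} \<longrightarrow> F \<union> G \<in> B)"

definition building_closure :: "nat \<Rightarrow> nat set set \<Rightarrow> nat set set" where
  "building_closure n \<F> = \<Inter>{B. building_set n B \<and> \<F> \<subseteq> B}"

definition connected_hypergraph :: "nat \<Rightarrow> nat set set \<Rightarrow> bool" where
  "connected_hypergraph n \<F> \<longleftrightarrow> (\<forall>A. A \<subseteq> {1..n} \<and> A \<noteq> {} \<and> A \<noteq> {1..n} \<longrightarrow>
      (\<exists>F\<in>\<F>. F \<inter> A \<noteq> {} \<and> F \<inter> ({1..n} - A) \<noteq> {}))"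

definition tight :: "nat \<Rightarrow> nat set set \<Rightarrow> bool" where
  "tight n \<F> \<longleftrightarrow> connected_hypergraph n \<F> \<and>
     (\<forall>X \<in> building_closure n \<F> - {{1..n}}.
        polyh n \<F> (building_closure n \<F> - {X}) \<noteq> polyh n \<F> (building_closure n \<F>))"

definition cyc_interval :: "nat \<Rightarrow> nat \<Rightarrow> nat \<Rightarrow> nat set" where
  "cyc_interval n i k = {((i - 1 + t) mod n) + 1 | t. t < k}"

definition Con_cycle :: "nat \<Rightarrow> nat set set" where
  "Con_cycle n = insert {1..n} {cyc_interval n i k | i k. i \<in> {1..n} \<and> 1 \<le> k \<and> k < n}"

definition cycle_edges :: "nat \<Rightarrow> nat set set" where
  "cycle_edges n = {{i, i mod n + 1} | i. i \<in> {1..n}}"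

end

theory Submission imports Defs begin


definition qq :: "nat \<Rightarrow> nat \<Rightarrow> nat" where "qq n u = u mod n + 1"
definition ee :: "nat \<Rightarrow> nat \<Rightarrow> nat set" where "ee n i = {i, i mod n + 1}"

lemma qq_in: "n > 0 \<Longrightarrow> qq n u \<in> {1..n}"
  by (simp add: qq_def Suc_leI)

lemma qq_suc: "qq n u mod n + 1 = qq n (Suc u)"
  by (simp add: qq_def mod_Suc_eq)

lemma qq_pred: "i \<in> {1..n} \<Longrightarrow> qq n (i - 1) = i"
  by (auto simp: qq_def)

lemma qq_mod: "qq n (u mod n) = qq n u"
  by (simp add: qq_def)

lemma qq_add_mult: "qq n (u + n * m) = qq n u"
  by (simp add: qq_def)

lemma cycle_edges_alt: "cycle_edges n = ee n ` {1..n}"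
  by (auto simp: cycle_edges_def ee_def)

lemma ee_inj: assumes "n \<ge> 3" shows "inj_on (ee n) {1..n}"
proof
  fix i j assume i: "i \<in> {1..n}" and j: "j \<in> {1..n}" and e: "ee n i = ee n j"
  show "i = j"
  proof (rule ccontr)
    assume "i \<noteq> j"
    with e have "i = j mod n + 1" "j = i mod n + 1" unfolding ee_def by (auto simp: doubleton_eq_iff)
    note h = this
    show False
    proof (cases "i = n")
      case True
      then have "j = 1" using h(2) by simp
      moreover have "(1::nat) mod n = 1" using assms by simp
      ultimately have "i = 2" using h(1) by (metis one_add_one)
      then show False using True assms by simp
    next
      case False
      then have "i mod n = i" using i by simp
      then have ji: "j = i + 1" using h(2) by simp
      show False
      proof (cases "j = n")
        case True then have "i = 1" using h(1) by (metis mod_self add_0)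
        then show False using ji True assms by simp
      next
        case False then have "j mod n = j" using j by simp
        then show False using h(1) ji by linarith
      qed
    qed
  qed
qed

lemma cyc_interval_alt: "i \<in> {1..n} \<Longrightarrow> cyc_interval n i k = qq n ` {i-1..<i-1+k}"
proof -
  have "{i-1..<i-1+k} = (\<lambda>t. i - 1 + t) ` {..<k}"
    by (simp add: image_add_atLeastLessThan' lessThan_atLeast0 add.commute)
  then show ?thesis
    by (auto simp: cyc_interval_def qq_def)
qed

lemma qq_inj_aux: fixes u v n :: nat assumes "u \<le> v" "v < u + n" "u mod n = v mod n" shows "u = v"
proof -
  have "n dvd v - u" using mod_eq_dvd_iff_nat[of u v n] assms by auto
  moreover have "v - u < n" using assms by auto
  ultimately have "v - u = 0" using nat_dvd_not_less[of "v-u" n] by (cases "v - u = 0") auto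
  then show ?thesis using assms by simp
qed

lemma qq_inj: "inj_on (qq n) {a..<a+n}"
proof
  fix u v assume u: "u \<in> {a..<a+n}" and v: "v \<in> {a..<a+n}" and e: "qq n u = qq n v"
  then have m: "u mod n = v mod n" by (simp add: qq_def)
  show "u = v"
  proof (cases "u \<le> v")
    case True then show ?thesis using qq_inj_aux[OF True _ m] u v by simp
  next
    case False then show ?thesis using qq_inj_aux[of v u n] m u v by simp
  qed
qed

lemma qq_full: assumes "n > 0" shows "qq n ` {a..<a+n} = {1..n}"
proof -
  have s: "qq n ` {a..<a+n} \<subseteq> {1..n}" using qq_in assms by auto
  have "card (qq n ` {a..<a+n}) = n" using card_image[OF qq_inj] by simp
  then show ?thesis using card_subset_eq[OF _ s] by simp
qed

lemma qq_sub: "n > 0 \<Longrightarrow> qq n ` A \<subseteq> {1..n}"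
  using qq_in by auto

lemma qq_shift: "qq n ` {a..<a+k} = qq n ` {a mod n..<a mod n + k}"
proof -
  have "{a..<a+k} = (\<lambda>v. v + n * (a div n)) ` {a mod n..<a mod n + k}"
    by (simp add: image_add_atLeastLessThan' mod_div_mult_eq add.commute)
  then have "qq n ` {a..<a+k} = (\<lambda>v. qq n (v + n * (a div n))) ` {a mod n..<a mod n + k}"
    by (simp only: image_image)
  then show ?thesis by (simp only: qq_add_mult)
qed

lemma qq_card: "k \<le> n \<Longrightarrow> card (qq n ` {a..<a+k}) = k"
proof -
  assume "k \<le> n"
  have "inj_on (qq n) {a..<a+k}" by (rule inj_on_subset[OF qq_inj[of n a]]) (use \<open>k \<le> n\<close> in auto)
  then show ?thesis by (simp add: card_image)
qed

lemma Con_alt: assumes "n > 0"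
  shows "X \<in> Con_cycle n \<longleftrightarrow> X = {1..n} \<or> (\<exists>a k. 1 \<le> k \<and> k < n \<and> X = qq n ` {a..<a+k})"
proof
  assume "X \<in> Con_cycle n"
  then have "X = {1..n} \<or> (\<exists>i k. i \<in> {1..n} \<and> 1 \<le> k \<and> k < n \<and> X = cyc_interval n i k)"
    unfolding Con_cycle_def by blast
  then show "X = {1..n} \<or> (\<exists>a k. 1 \<le> k \<and> k < n \<and> X = qq n ` {a..<a+k})"
  proof
    assume "\<exists>i k. i \<in> {1..n} \<and> 1 \<le> k \<and> k < n \<and> X = cyc_interval n i k"
    then obtain i k where "i \<in> {1..n}" "1 \<le> k" "k < n" "X = cyc_interval n i k" by blast
    then have "1 \<le> k \<and> k < n \<and> X = qq n ` {i-1..<i-1+k}" using cyc_interval_alt by blast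
    then show ?thesis by blast
  qed simp
next
  assume "X = {1..n} \<or> (\<exists>a k. 1 \<le> k \<and> k < n \<and> X = qq n ` {a..<a+k})"
  then show "X \<in> Con_cycle n"
  proof
    assume "\<exists>a k. 1 \<le> k \<and> k < n \<and> X = qq n ` {a..<a+k}"
    then obtain a k where ak: "1 \<le> k" "k < n" "X = qq n ` {a..<a+k}" by blast
    define i where "i = a mod n + 1"
    have i: "i \<in> {1..n}" using assms by (simp add: i_def Suc_leI)
    have "X = cyc_interval n i k" using ak(3) qq_shift[of n a k] cyc_interval_alt[OF i, of k]
      by (simp add: i_def)
    then have "X \<in> {cyc_interval n i k | i k. i \<in> {1..n} \<and> 1 \<le> k \<and> k < n}" using i ak by blast
    then show ?thesis unfolding Con_cycle_def by (rule insertI2)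
  qed (simp add: Con_cycle_def)
qed

lemma qq_int_Con: assumes "n > 0" "a < b" shows "qq n ` {a..<b} \<in> Con_cycle n"
proof (cases "b - a < n")
  case True
  have e: "qq n ` {a..<b} = qq n ` {a..<a+(b-a)}" using assms(2) by simp
  have "1 \<le> b - a" "b - a < n" using True assms(2) by auto
  then have "\<exists>a' k. 1 \<le> k \<and> k < n \<and> qq n ` {a..<b} = qq n ` {a'..<a'+k}"
    using e by (intro exI[of _ a] exI[of _ "b-a"]) simp
  then show ?thesis by (intro iffD2[OF Con_alt[OF assms(1)]] disjI2)
next
  case False
  then have "qq n ` {a..<a+n} \<subseteq> qq n ` {a..<b}" by (intro image_mono) auto
  moreover have "qq n ` {a..<b} \<subseteq> {1..n}" by (rule qq_sub[OF assms(1)])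
  ultimately have "qq n ` {a..<b} = {1..n}" using qq_full[OF assms(1), of a] by (rule_tac subset_antisym) simp_all
  then show ?thesis by (simp add: Con_cycle_def)
qed



lemma restr_edges: "restr (cycle_edges n) J = ee n ` {i\<in>{1..n}. i \<in> J \<and> i mod n + 1 \<in> J}"
  by (auto simp: restr_def cycle_edges_alt ee_def)

lemma card_restr: assumes "n \<ge> 3"
  shows "card (restr (cycle_edges n) J) = card {i\<in>{1..n}. i \<in> J \<and> i mod n + 1 \<in> J}"
  unfolding restr_edges by (rule card_image, rule inj_on_subset[OF ee_inj[OF assms]]) auto

lemma card_edges: assumes "n \<ge> 3" shows "card (cycle_edges n) = n"
  unfolding cycle_edges_alt using card_image[OF ee_inj[OF assms]] by simp

lemma finite_edges: "finite (cycle_edges n)"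
  unfolding cycle_edges_alt by simp

lemma restr_int_set: assumes "n \<ge> 3" "1 \<le> k" "k < n"
  shows "{i\<in>{1..n}. i \<in> qq n ` {a..<a+k} \<and> i mod n + 1 \<in> qq n ` {a..<a+k}} = qq n ` {a..<a+(k-1)}"
proof
  have n0: "n > 0" using assms by simp
  show "qq n ` {a..<a+(k-1)} \<subseteq> {i\<in>{1..n}. i \<in> qq n ` {a..<a+k} \<and> i mod n + 1 \<in> qq n ` {a..<a+k}}"
  proof
    fix i assume "i \<in> qq n ` {a..<a+(k-1)}"
    then obtain u where u: "u \<in> {a..<a+(k-1)}" "i = qq n u" by blast
    have "i mod n + 1 = qq n (Suc u)" using u(2) qq_suc by simp
    then show "i \<in> {i\<in>{1..n}. i \<in> qq n ` {a..<a+k} \<and> i mod n + 1 \<in> qq n ` {a..<a+k}}"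
      using u qq_in[OF n0] by auto
  qed
next
  show "{i\<in>{1..n}. i \<in> qq n ` {a..<a+k} \<and> i mod n + 1 \<in> qq n ` {a..<a+k}} \<subseteq> qq n ` {a..<a+(k-1)}"
  proof
    fix i assume "i \<in> {i\<in>{1..n}. i \<in> qq n ` {a..<a+k} \<and> i mod n + 1 \<in> qq n ` {a..<a+k}}"
    then obtain u v where u: "u \<in> {a..<a+k}" "i = qq n u" and v: "v \<in> {a..<a+k}" "i mod n + 1 = qq n v"
      by blast
    have e: "qq n (Suc u) = qq n v" using u(2) v(2) qq_suc by simp
    have "u < a + (k - 1)"
    proof (rule ccontr)
      assume "\<not> u < a + (k - 1)"
      then have su: "Suc u = a + k" using u(1) by auto
      have "Suc u \<in> {a..<a+n}" "v \<in> {a..<a+n}" using su v(1) assms by auto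
      then have "Suc u = v" using e qq_inj[of n a] by (simp add: inj_on_def)
      then show False using su v(1) by simp
    qed
    then show "i \<in> qq n ` {a..<a+(k-1)}" using u by auto
  qed
qed

lemma card_restr_int: assumes "n \<ge> 3" "1 \<le> k" "k < n"
  shows "card (restr (cycle_edges n) (qq n ` {a..<a+k})) = k - 1"
  using card_restr[OF assms(1)] restr_int_set[OF assms] qq_card[of "k-1" n a] assms by simp

lemma card_restr_full: assumes "n \<ge> 3"
  shows "card (restr (cycle_edges n) {1..n}) = n"
proof -
  have "{i\<in>{1..n}. i \<in> {1..n} \<and> i mod n + 1 \<in> {1..n}} = {1..n}"
    using assms by (auto simp: Suc_leI)
  then show ?thesis using card_restr[OF assms] by simp
qed

lemma ee_int: assumes "i \<in> {1..n}" shows "ee n i = qq n ` {i-1..<i-1+2}"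
proof -
  have "{i-1..<i-1+2} = {i-1, Suc (i-1)}" by auto
  moreover have "qq n (Suc (i-1)) = i mod n + 1" using qq_suc[of n "i-1"] qq_pred[OF assms] by simp
  ultimately show ?thesis using qq_pred[OF assms] by (simp add: ee_def)
qed

lemma edges_Con: assumes "n \<ge> 3" shows "cycle_edges n \<subseteq> Con_cycle n"
proof
  fix F assume "F \<in> cycle_edges n"
  then obtain i where "i \<in> {1..n}" "F = ee n i" by (auto simp: cycle_edges_alt)
  then show "F \<in> Con_cycle n" using ee_int qq_int_Con[of n "i-1" "i-1+2"] assms by simp
qed

lemma union_lemma:
  assumes n: "n \<ge> 3" and ac: "a \<le> c" "c < n" and k: "1 \<le> k" and l: "1 \<le> l"
    and int: "qq n ` {a..<a+k} \<inter> qq n ` {c..<c+l} \<noteq> {}"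
    and kn: "k < n" and ln: "l < n"
  shows "qq n ` {a..<a+k} \<union> qq n ` {c..<c+l} \<in> Con_cycle n"
proof (cases "c \<le> a + k")
  case True
  have "{a..<a+k} \<union> {c..<c+l} = {a..<max (a+k) (c+l)}" using True ac by auto
  then have "qq n ` {a..<a+k} \<union> qq n ` {c..<c+l} = qq n ` {a..<max (a+k) (c+l)}"
    by (simp only: image_Un[symmetric])
  then show ?thesis using qq_int_Con[of n a "max (a+k) (c+l)"] n k by simp
next
  case False
  from int obtain u v where u: "u \<in> {a..<a+k}" and v: "v \<in> {c..<c+l}" and e: "qq n u = qq n v"
    by blast
  have um: "u mod n = u" using u False ac by simp
  have "v \<ge> n"
  proof (rule ccontr)
    assume "\<not> v \<ge> n"
    then have "v mod n = v" by simp
    then show False using e um u v False by (simp add: qq_def)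
  qed
  moreover have "v < 2 * n" using v ac ln by simp
  ultimately have "v mod n = v - n" by (simp add: le_mod_geq)
  then have vu: "v = u + n" using e um \<open>v \<ge> n\<close> by (simp add: qq_def)
  have sh: "qq n ` {a..<a+k} = qq n ` {a+n..<a+n+k}"
    using qq_shift[of n "a+n" k] ac by simp
  have "{a+n..<a+n+k} \<union> {c..<c+l} = {c..<max (a+n+k) (c+l)}" using vu u v ac by auto
  then have "qq n ` {a+n..<a+n+k} \<union> qq n ` {c..<c+l} = qq n ` {c..<max (a+n+k) (c+l)}"
    by (simp only: image_Un[symmetric])
  then have "qq n ` {a..<a+k} \<union> qq n ` {c..<c+l} = qq n ` {c..<max (a+n+k) (c+l)}"
    unfolding sh .
  then show ?thesis using qq_int_Con[of n c "max (a+n+k) (c+l)"] n l by simp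
qed


lemma Con_building: assumes n: "n \<ge> 3" shows "building_set n (Con_cycle n)"
proof -
  have n0: "n > 0" using n by simp
  have A: "\<forall>F\<in>Con_cycle n. F \<noteq> {} \<and> F \<subseteq> {1..n}"
  proof
    fix F assume "F \<in> Con_cycle n"
    then have "F = {1..n} \<or> (\<exists>a k. 1 \<le> k \<and> k < n \<and> F = qq n ` {a..<a+k})"
      using Con_alt[OF n0] by blast
    then show "F \<noteq> {} \<and> F \<subseteq> {1..n}"
    proof
      assume "F = {1..n}" then show ?thesis using n0 by auto
    next
      assume "\<exists>a k. 1 \<le> k \<and> k < n \<and> F = qq n ` {a..<a+k}"
      then obtain a k where "1 \<le> k" "F = qq n ` {a..<a+k}" by blast
      then show ?thesis using qq_sub[OF n0, of "{a..<a+k}"] by auto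
    qed
  qed
  have B: "\<forall>i\<in>{1..n}. {i} \<in> Con_cycle n"
  proof
    fix i assume i: "i \<in> {1..n}"
    have "{i} = qq n ` {i-1..<i-1+1}" using qq_pred[OF i] by simp
    then show "{i} \<in> Con_cycle n" using qq_int_Con[OF n0, of "i-1" "i-1+1"] by simp
  qed
  have C: "\<forall>F\<in>Con_cycle n. \<forall>G\<in>Con_cycle n. F \<inter> G \<noteq> {} \<longrightarrow> F \<union> G \<in> Con_cycle n"
  proof (intro ballI impI)
    fix F G assume F: "F \<in> Con_cycle n" and G: "G \<in> Con_cycle n" and FG: "F \<inter> G \<noteq> {}"
    show "F \<union> G \<in> Con_cycle n"
    proof (cases "F = {1..n} \<or> G = {1..n}")
      case True
      then have "F \<union> G = {1..n}" using A F G by blast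
      then show ?thesis by (simp add: Con_cycle_def)
    next
      case False
      have "\<exists>a k. 1 \<le> k \<and> k < n \<and> F = qq n ` {a..<a+k}" using F False Con_alt[OF n0] by blast
      then obtain a k where ak: "1 \<le> k" "k < n" "F = qq n ` {a..<a+k}" by blast
      have "\<exists>a k. 1 \<le> k \<and> k < n \<and> G = qq n ` {a..<a+k}" using G False Con_alt[OF n0] by blast
      then obtain c l where cl: "1 \<le> l" "l < n" "G = qq n ` {c..<c+l}" by blast
      define a' where "a' = a mod n"
      define c' where "c' = c mod n"
      have F': "F = qq n ` {a'..<a'+k}" using ak qq_shift a'_def by simp
      have G': "G = qq n ` {c'..<c'+l}" using cl qq_shift c'_def by simp
      have a'n: "a' < n" "c' < n" using n0 a'_def c'_def by auto
      show ?thesis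
      proof (cases "a' \<le> c'")
        case True
        then show ?thesis using union_lemma[OF n True a'n(2) ak(1) cl(1) _ ak(2) cl(2)] F' G' FG by simp
      next
        case False
        then have ca: "c' \<le> a'" by simp
        show ?thesis using union_lemma[OF n ca a'n(1) cl(1) ak(1) _ cl(2) ak(2)] F' G' FG
          by (simp add: Un_commute Int_commute)
      qed
    qed
  qed
  show ?thesis unfolding building_set_def using A B C by blast
qed

lemma in_B: assumes n: "n \<ge> 3" and B: "building_set n B" "cycle_edges n \<subseteq> B"
  shows "qq n ` {a..<a+Suc k} \<in> B"
proof (induction k)
  case 0
  have n0: "n > 0" using n by simp
  have "qq n ` {a..<a+Suc 0} = {qq n a}" by simp
  then show ?case using B(1) qq_in[OF n0] unfolding building_set_def by simp
next
  case (Suc k)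
  have n0: "n > 0" using n by simp
  have "{a..<a+Suc (Suc k)} = {a..<a+Suc k} \<union> {a+k, Suc (a+k)}" by auto
  then have eq: "qq n ` {a..<a+Suc (Suc k)} = qq n ` {a..<a+Suc k} \<union> {qq n (a+k), qq n (Suc (a+k))}"
    by auto
  have "{qq n (a+k), qq n (Suc (a+k))} = ee n (qq n (a+k))" using qq_suc[of n "a+k"] by (simp add: ee_def)
  moreover have "ee n (qq n (a+k)) \<in> cycle_edges n"
    unfolding cycle_edges_alt by (rule imageI[OF qq_in[OF n0]])
  ultimately have E: "{qq n (a+k), qq n (Suc (a+k))} \<in> B"
    using B(2) by auto
  have "a + k \<in> {a..<a+Suc k}" by simp
  then have "qq n (a+k) \<in> qq n ` {a..<a+Suc k}" by (rule imageI)
  then have I: "qq n ` {a..<a+Suc k} \<inter> {qq n (a+k), qq n (Suc (a+k))} \<noteq> {}" by blast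
  have U: "\<forall>F\<in>B. \<forall>G\<in>B. F \<inter> G \<noteq> {} \<longrightarrow> F \<union> G \<in> B"
    using B(1) unfolding building_set_def by (elim conjE)
  have "qq n ` {a..<a+Suc k} \<union> {qq n (a+k), qq n (Suc (a+k))} \<in> B"
    by (rule U[rule_format, OF Suc.IH E I])
  then show ?case using eq by simp
qed

lemma closure_Con: assumes n: "n \<ge> 3" shows "building_closure n (cycle_edges n) = Con_cycle n"
proof
  show "building_closure n (cycle_edges n) \<subseteq> Con_cycle n"
    unfolding building_closure_def using Con_building[OF n] edges_Con[OF n] by blast
next
  have n0: "n > 0" using n by simp
  show "Con_cycle n \<subseteq> building_closure n (cycle_edges n)"
    unfolding building_closure_def
  proof (intro Inter_greatest subsetI)
    fix B X assume "B \<in> {B. building_set n B \<and> cycle_edges n \<subseteq> B}" and X: "X \<in> Con_cycle n"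
    then have B: "building_set n B" "cycle_edges n \<subseteq> B" by auto
    from X have "X = {1..n} \<or> (\<exists>a k. 1 \<le> k \<and> k < n \<and> X = qq n ` {a..<a+k})"
      using Con_alt[OF n0] by blast
    then show "X \<in> B"
    proof
      assume "X = {1..n}"
      then have "X = qq n ` {0..<0 + Suc (n-1)}" using qq_full[OF n0, of 0] n0 by simp
      then show ?thesis using in_B[OF n B, of 0 "n-1"] by simp
    next
      assume "\<exists>a k. 1 \<le> k \<and> k < n \<and> X = qq n ` {a..<a+k}"
      then obtain a k where "1 \<le> k" "X = qq n ` {a..<a+k}" by auto
      then have "X = qq n ` {a..<a+Suc (k-1)}" by simp
      then show ?thesis using in_B[OF n B, of a "k-1"] by simp
    qed
  qed
qed



lemma simplex_eq:
  assumes "y \<in> simplex F"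
  shows "\<exists>c. (\<forall>i\<in>F. c i \<ge> 0) \<and> sum c F = 1 \<and> y = (\<lambda>j. if j \<in> F then c j else 0)"
proof -
  obtain c where c: "\<forall>i\<in>F. c i \<ge> 0" "sum c F = 1" "y = (\<lambda>j. \<Sum>i\<in>F. c i * std_basis i j)"
    using assms unfolding simplex_def by blast
  have "(\<lambda>j. \<Sum>i\<in>F. c i * std_basis i j) = (\<lambda>j. if j \<in> F then c j else 0)"
  proof
    fix j
    have "(\<Sum>i\<in>F. c i * std_basis i j) = (\<Sum>i\<in>F. if i = j then c i else 0)"
      by (rule sum.cong) (auto simp: std_basis_def)
    also have "\<dots> = (if j \<in> F then c j else 0)"
    proof (cases "finite F")
      case True then show ?thesis by (simp add: sum.delta)
    next
      case False
      then have "sum c F = 0" by simp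
      then show ?thesis using c(2) by simp
    qed
    finally show "(\<Sum>i\<in>F. c i * std_basis i j) = (if j \<in> F then c j else 0)" .
  qed
  then show ?thesis using c by auto
qed

lemma simplex_props:
  assumes "y \<in> simplex F" "finite X"
  shows "(\<Sum>j\<in>X. y j) \<ge> 0" "F \<subseteq> X \<Longrightarrow> (\<Sum>j\<in>X. y j) = 1" "j \<notin> F \<Longrightarrow> y j = 0"
proof -
  obtain c where c: "\<forall>i\<in>F. c i \<ge> 0" "sum c F = 1" "y = (\<lambda>j. if j \<in> F then c j else 0)"
    using simplex_eq[OF assms(1)] by blast
  have s: "(\<Sum>j\<in>X. y j) = (\<Sum>j\<in>X \<inter> F. c j)"
    unfolding c(3) using assms(2) by (simp add: sum.inter_restrict)
  show "(\<Sum>j\<in>X. y j) \<ge> 0" unfolding s using c(1) by (intro sum_nonneg) auto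
  show "F \<subseteq> X \<Longrightarrow> (\<Sum>j\<in>X. y j) = 1"
  proof -
    assume "F \<subseteq> X"
    then have "X \<inter> F = F" by blast
    then show ?thesis unfolding s using c(2) by simp
  qed
  show "j \<notin> F \<Longrightarrow> y j = 0" using c(3) by simp
qed

lemma nest_sub_polyh:
  assumes fin: "finite FF" and sub: "\<forall>F\<in>FF. F \<subseteq> {1..n}" and finS: "\<forall>X\<in>S. finite X"
    and x: "x \<in> nestohedron FF"
  shows "x \<in> polyh n FF S"
proof -
  obtain y where y: "\<forall>F\<in>FF. y F \<in> simplex F" and xe: "x = (\<lambda>j. \<Sum>F\<in>FF. y F j)"
    using x unfolding nestohedron_def by blast
  have phiX: "phi X x \<ge> real (card (restr FF X))" if X: "finite X" for X
  proof -
    have "phi X x = (\<Sum>F\<in>FF. \<Sum>j\<in>X. y F j)"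
      unfolding phi_def xe by (rule sum.swap)
    also have "\<dots> = (\<Sum>F\<in>restr FF X. \<Sum>j\<in>X. y F j) + (\<Sum>F\<in>FF - restr FF X. \<Sum>j\<in>X. y F j)"
      using fin by (metis (no_types, lifting) add.commute restr_def mem_Collect_eq subsetI sum.subset_diff)
    also have "(\<Sum>F\<in>restr FF X. \<Sum>j\<in>X. y F j) = (\<Sum>F\<in>restr FF X. 1)"
      by (rule sum.cong) (auto simp: restr_def intro!: simplex_props(2)[OF _ X] y[rule_format])
    finally have eq: "phi X x = (\<Sum>F\<in>restr FF X. 1) + (\<Sum>F\<in>FF - restr FF X. \<Sum>j\<in>X. y F j)" .
    have "(\<Sum>F\<in>FF - restr FF X. \<Sum>j\<in>X. y F j) \<ge> 0"
      by (rule sum_nonneg) (auto intro!: simplex_props(1)[OF _ X] y[rule_format])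
    then show ?thesis using eq by simp
  qed
  have van: "x j = 0" if "j \<notin> {1..n}" for j
  proof -
    have "\<forall>F\<in>FF. y F j = 0"
    proof
      fix F assume F: "F \<in> FF"
      then have "j \<notin> F" using sub that by blast
      then show "y F j = 0" using simplex_props(3)[OF y[rule_format, OF F] finite.emptyI] by simp
    qed
    then show ?thesis unfolding xe by simp
  qed
  have "restr FF {1..n} = FF" using sub by (auto simp: restr_def)
  moreover have "phi {1..n} x = real (card FF)"
  proof -
    have "phi {1..n} x = (\<Sum>F\<in>FF. \<Sum>j\<in>{1..n}. y F j)"
      unfolding phi_def xe by (rule sum.swap)
    also have "\<dots> = (\<Sum>F\<in>FF. 1)"
      by (rule sum.cong) (use sub in \<open>auto intro!: simplex_props(2) y[rule_format]\<close>)
    finally show ?thesis by simp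
  qed
  ultimately show ?thesis unfolding polyh_def using van phiX finS by auto
qed



lemma sum_qq: assumes "a \<le> b" "b \<le> a + n"
  shows "(\<Sum>u\<in>qq n ` {a..<b}. f u) = (\<Sum>t\<in>{a..<b}. f (qq n t))"
proof -
  have "inj_on (qq n) {a..<b}" by (rule inj_on_subset[OF qq_inj[of n a]]) (use assms in auto)
  then show ?thesis by (simp add: sum.reindex)
qed

lemma qq_small: "t < n \<Longrightarrow> qq n t = Suc t"
  by (simp add: qq_def)

lemma S_diff:
  fixes x :: "nat \<Rightarrow> real"
  assumes "i \<le> j"
  shows "(\<Sum>t<j. x (Suc t) - 1) - (\<Sum>t<i. x (Suc t) - 1) = (\<Sum>t\<in>{i..<j}. x (Suc t)) - (real j - real i)"
proof -
  have "(\<Sum>t<j. x (Suc t) - 1) - (\<Sum>t<i. x (Suc t) - 1) = (\<Sum>t\<in>{i..<j}. x (Suc t) - 1)"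
    using sum_diff_nat_ivl[of 0 i j "\<lambda>t. x (Suc t) - 1"] assms by (simp add: lessThan_atLeast0)
  also have "\<dots> = (\<Sum>t\<in>{i..<j}. x (Suc t)) - (real j - real i)"
    using assms by (simp add: sum_subtractf of_nat_diff)
  finally show ?thesis .
qed

lemma polyh_sub_nest:
  assumes n: "n \<ge> 3" and x: "x \<in> polyh n (cycle_edges n) (Con_cycle n)"
  shows "x \<in> nestohedron (cycle_edges n)"
proof -
  have n0: "n > 0" using n by simp
  have van: "\<And>j. j \<notin> {1..n} \<Longrightarrow> x j = 0" and tot: "phi {1..n} x = real n"
    and con: "\<And>X. X \<in> Con_cycle n \<Longrightarrow> phi X x \<ge> real (card (restr (cycle_edges n) X))"
    using x card_edges[OF n] unfolding polyh_def by auto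
  have lb: "(\<Sum>t\<in>{a..<a+k}. x (qq n t)) \<ge> real k - 1" if k: "1 \<le> k" "k < n" for a k
  proof -
    have "qq n ` {a..<a+k} \<in> Con_cycle n" using qq_int_Con[OF n0, of a "a+k"] k by simp
    then have "phi (qq n ` {a..<a+k}) x \<ge> real (k - 1)"
      using con card_restr_int[OF n k] by fastforce
    moreover have "phi (qq n ` {a..<a+k}) x = (\<Sum>t\<in>{a..<a+k}. x (qq n t))"
      unfolding phi_def using k by (intro sum_qq) auto
    ultimately show ?thesis using k by (simp add: of_nat_diff)
  qed
  have full: "(\<Sum>t\<in>{a..<a+n}. x (qq n t)) = real n" for a
    using tot qq_full[OF n0, of a] sum_qq[of a "a+n" n x] unfolding phi_def by simp
  define S where "S j = (\<Sum>t<j. x (Suc t) - 1)" for j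
  have Sd: "S j - S i = (\<Sum>t\<in>{i..<j}. x (qq n t)) - (real j - real i)" if "i \<le> j" "j \<le> n" for i j
  proof -
    have "(\<Sum>t\<in>{i..<j}. x (Suc t)) = (\<Sum>t\<in>{i..<j}. x (qq n t))"
      by (rule sum.cong) (use that in \<open>auto simp: qq_small\<close>)
    then show ?thesis using S_diff[OF that(1), of x] unfolding S_def by simp
  qed
  have D1: "S j - S i \<le> 1 \<and> S i - S j \<le> 1" if ij: "i \<le> j" "j \<le> n" for i j
  proof (cases "j - i = 0 \<or> j - i = n")
    case True
    then show ?thesis
    proof
      assume "j - i = 0" then have "i = j" using ij by simp
      then show ?thesis by simp
    next
      assume "j - i = n" then have "i = 0" "j = n" using ij by auto
      then show ?thesis using Sd[OF ij] full[of 0] by simp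
    qed
  next
    case False
    then have L: "1 \<le> j - i" "j - i < n" using ij by auto
    have "(\<Sum>t\<in>{i..<i+(j-i)}. x (qq n t)) \<ge> real (j - i) - 1" using lb[OF L] .
    then have T1: "(\<Sum>t\<in>{i..<j}. x (qq n t)) \<ge> real j - real i - 1" using ij by (simp add: of_nat_diff)
    have L2: "1 \<le> n - (j - i)" "n - (j - i) < n" using L by auto
    have "(\<Sum>t\<in>{j..<j+(n-(j-i))}. x (qq n t)) \<ge> real (n - (j - i)) - 1" using lb[OF L2] .
    moreover have "j + (n - (j - i)) = i + n" using ij L by simp
    ultimately have T2: "(\<Sum>t\<in>{j..<i+n}. x (qq n t)) \<ge> real n - (real j - real i) - 1"
      using ij L by (simp add: of_nat_diff add.commute)
    have "(\<Sum>t\<in>{i..<j}. x (qq n t)) + (\<Sum>t\<in>{j..<i+n}. x (qq n t)) = (\<Sum>t\<in>{i..<i+n}. x (qq n t))"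
      using ij by (intro sum.atLeastLessThan_concat) auto
    then have T3: "(\<Sum>t\<in>{i..<j}. x (qq n t)) + (\<Sum>t\<in>{j..<i+n}. x (qq n t)) = real n"
      using full[of i] by simp
    show ?thesis using Sd[OF ij] T1 T2 T3 by linarith
  qed
  have D: "S j - S i \<le> 1" if "i \<le> n" "j \<le> n" for i j
    using D1[of i j] D1[of j i] that by (cases "i \<le> j") auto
  define m where "m = Min (S ` {0..n})"
  have m_le: "m \<le> S j" if "j \<le> n" for j unfolding m_def using that by (intro Min_le) auto
  have "m \<in> S ` {0..n}" unfolding m_def by (rule Min_in) auto
  then obtain j0 where j0: "j0 \<le> n" "m = S j0" by auto
  define al where "al j = S j - m" for j
  have al0: "0 \<le> al j" and al1: "al j \<le> 1" if "j \<le> n" for j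
    using m_le[OF that] D[OF j0(1) that] j0(2) unfolding al_def by auto
  have Sn: "S n = 0"
  proof -
    have "S n = (\<Sum>t<n. x (Suc t)) - real n" unfolding S_def by (simp add: sum_subtractf)
    also have "(\<Sum>t<n. x (Suc t)) = phi {1..n} x" unfolding phi_def
      using sum.atLeast1_atMost_eq[of x n] by simp
    finally show ?thesis using tot by simp
  qed
  define c where "c F t = (\<Sum>i\<in>{1..n}. if F = ee n i then (if t = i then al i else 1 - al i) else 0)" for F t
  define y where "y F = (\<lambda>j. \<Sum>t\<in>F. c F t * std_basis t j)" for F
  have cE: "c (ee n i0) t = (if t = i0 then al i0 else 1 - al i0)" if i0: "i0 \<in> {1..n}" for i0 t
  proof -
    have "c (ee n i0) t = (\<Sum>i\<in>{1..n}. if i0 = i then (if t = i then al i else 1 - al i) else 0)"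
      unfolding c_def
      by (rule sum.cong) (use i0 inj_on_eq_iff[OF ee_inj[OF n]] in auto)
    then show ?thesis using i0 by simp
  qed
  have ne: "i \<noteq> i mod n + 1" if "i \<in> {1..n}" for i
    using that n by (cases "i = n") auto
  have ee2: "ee n i = {i, i mod n + 1}" for i by (simp add: ee_def)
  have yE: "y (ee n i) j = al i * std_basis i j + (1 - al i) * std_basis (i mod n + 1) j"
    if i: "i \<in> {1..n}" for i j
    unfolding y_def ee2[of i] using ne[OF i] cE[OF i] ee2[of i] by simp
  have simp_ok: "\<forall>F\<in>cycle_edges n. y F \<in> simplex F"
  proof
    fix F assume "F \<in> cycle_edges n"
    then obtain i where i: "i \<in> {1..n}" "F = ee n i" unfolding cycle_edges_alt by auto
    have "\<forall>t\<in>F. c F t \<ge> 0" using i cE[OF i(1)] al0[of i] al1[of i] by (auto simp: ee2)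
    moreover have "(\<Sum>t\<in>F. c F t) = 1" using i cE[OF i(1)] ne[OF i(1)] by (simp add: ee2)
    ultimately show "y F \<in> simplex F" unfolding simplex_def y_def by blast
  qed
  have xeq: "x = (\<lambda>j. \<Sum>F\<in>cycle_edges n. y F j)"
  proof
    fix j
    have "(\<Sum>F\<in>cycle_edges n. y F j) = (\<Sum>i\<in>{1..n}. y (ee n i) j)"
      unfolding cycle_edges_alt by (rule sum.reindex[OF ee_inj[OF n], unfolded comp_def])
    also have "\<dots> = (\<Sum>i\<in>{1..n}. al i * std_basis i j) + (\<Sum>i\<in>{1..n}. (1 - al i) * std_basis (i mod n + 1) j)"
      by (simp add: yE sum.distrib)
    also have "(\<Sum>i\<in>{1..n}. al i * std_basis i j) = (\<Sum>i\<in>{1..n}. if j = i then al i else 0)"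
      by (rule sum.cong) (auto simp: std_basis_def)
    also have "\<dots> = (if j \<in> {1..n} then al j else 0)" by (rule sum.delta') simp
    finally have E1: "(\<Sum>F\<in>cycle_edges n. y F j) = (if j \<in> {1..n} then al j else 0) +
        (\<Sum>i\<in>{1..n}. (1 - al i) * std_basis (i mod n + 1) j)" .
    show "x j = (\<Sum>F\<in>cycle_edges n. y F j)"
    proof (cases "j \<in> {1..n}")
      case False
      have "(\<Sum>i\<in>{1..n}. (1 - al i) * std_basis (i mod n + 1) j) = 0"
        by (rule sum.neutral) (use False n0 in \<open>auto simp: std_basis_def Suc_le_eq\<close>)
      then have "(\<Sum>F\<in>cycle_edges n. y F j) = 0" using E1 False by (simp only: if_False)
      then show ?thesis using van[OF False] by simp
    next
      case True
      define pj where "pj = (if j = 1 then n else j - 1)"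
      have pj: "pj \<in> {1..n}" using True n0 by (auto simp: pj_def)
      have iff: "j = i mod n + 1 \<longleftrightarrow> pj = i" if "i \<in> {1..n}" for i
        using that True n0 by (cases "i = n") (auto simp: pj_def)
      have "(\<Sum>i\<in>{1..n}. (1 - al i) * std_basis (i mod n + 1) j) = (\<Sum>i\<in>{1..n}. if pj = i then 1 - al i else 0)"
      proof (rule sum.cong)
        fix i assume i: "i \<in> {1..n}"
        have "std_basis (i mod n + 1) j = (if pj = i then 1 else 0)"
          unfolding std_basis_def by (simp only: iff[OF i])
        then show "(1 - al i) * std_basis (i mod n + 1) j = (if pj = i then 1 - al i else 0)" by simp
      qed simp
      also have "\<dots> = 1 - al pj" using pj by simp
      finally have E2: "(\<Sum>F\<in>cycle_edges n. y F j) = al j + 1 - al pj" using E1 True by simp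
      have "x j = S j - S pj + 1"
      proof (cases "j = 1")
        case True
        then have "S j = x 1 - 1" unfolding S_def by simp
        then show ?thesis using True Sn by (simp add: pj_def)
      next
        case False
        then have j: "j = Suc pj" using \<open>j \<in> {1..n}\<close> by (auto simp: pj_def)
        have "S (Suc pj) = S pj + (x (Suc pj) - 1)" unfolding S_def by simp
        then show ?thesis using j by simp
      qed
      then show ?thesis using E2 unfolding al_def by simp
    qed
  qed
  show ?thesis unfolding nestohedron_def using simp_ok xeq by blast
qed



lemma ineq:
  fixes p q k n :: nat
  assumes pk: "p \<le> k" and k1: "1 \<le> k" and kn: "k < n" and q0: "q = 0 \<Longrightarrow> p < k"
  shows "real p * (1 - (1 + 1/real n)/real k) + real q * (1 + (1 + 1/real n)/real (n-k))
         \<ge> real p + real q - 1"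
proof -
  define D where "D = 1 + 1 / real n"
  define K where "K = real k"
  define M where "M = real (n - k)"
  have Kp: "K > 0" using k1 by (simp add: K_def)
  have Mp: "M \<ge> 1" using kn by (simp add: M_def)
  have Dp: "D > 0" by (simp add: D_def add_pos_nonneg)
  have MN: "M \<le> real n" using kn by (simp add: M_def)
  have main: "real q * D / M - real p * D / K \<ge> -1"
  proof (cases "q = 0")
    case True
    then have "p + 1 \<le> k" using q0 by simp
    then have "real p + 1 \<le> K" by (simp add: K_def)
    have "real p * (real n + 1) \<le> K * real n"
    proof -
      have "real p * (real n + 1) = real p * real n + real p" by (simp add: algebra_simps)
      also have "\<dots> \<le> real p * real n + real n" using pk kn by simp
      also have "\<dots> = (real p + 1) * real n" by (simp add: algebra_simps)
      also have "\<dots> \<le> K * real n" using \<open>real p + 1 \<le> K\<close> by (intro mult_right_mono) auto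
      finally show ?thesis .
    qed
    then have "real p * D \<le> K" using kn unfolding D_def by (simp add: field_simps)
    then have "real p * D / K \<le> 1" using Kp by (simp add: field_simps)
    then show ?thesis using True by simp
  next
    case False
    then have "real q \<ge> 1" by simp
    then have A: "real q * D / M \<ge> D / M" using Dp Mp by (simp add: divide_right_mono)
    have "real p * D / K \<le> D" using pk Kp Dp by (simp add: field_simps K_def mult_right_mono)
    moreover have "D - D / M \<le> 1"
    proof -
      have "(real n + 1) * (M - 1) \<le> real n * M" using MN by (simp add: algebra_simps)
      then have "D * (M - 1) \<le> M" using kn unfolding D_def by (simp add: field_simps)
      then show ?thesis using Mp by (simp add: field_simps)
    qed
    ultimately show ?thesis using A by linarith
  qed
  then show ?thesis unfolding D_def K_def M_def by (simp add: algebra_simps)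
qed



lemma Con_sub: assumes "n > 0" "J \<in> Con_cycle n" shows "J \<subseteq> {1..n}"
proof -
  have "J = {1..n} \<or> (\<exists>a k. 1 \<le> k \<and> k < n \<and> J = qq n ` {a..<a+k})"
    using Con_alt[OF assms(1)] assms(2) by blast
  then show ?thesis
  proof
    assume "\<exists>a k. 1 \<le> k \<and> k < n \<and> J = qq n ` {a..<a+k}"
    then obtain a k where "J = qq n ` {a..<a+k}" by blast
    then show ?thesis using qq_sub[OF assms(1)] by simp
  qed simp
qed

lemma sum_z:
  fixes al be :: real
  assumes "J \<subseteq> {1..n}"
  shows "phi J (\<lambda>j. if j \<in> X then al else if j \<in> {1..n} then be else 0)
       = real (card (J \<inter> X)) * al + real (card (J - X)) * be"
proof -
  have fJ: "finite J" using assms finite_subset by blast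
  have "phi J (\<lambda>j. if j \<in> X then al else if j \<in> {1..n} then be else 0)
      = (\<Sum>j\<in>J \<inter> {j. j \<in> X}. al) + (\<Sum>j\<in>J \<inter> - {j. j \<in> X}. if j \<in> {1..n} then be else 0)"
    unfolding phi_def by (rule sum.If_cases[OF fJ])
  also have "(\<Sum>j\<in>J \<inter> - {j. j \<in> X}. if j \<in> {1..n} then be else 0) = (\<Sum>j\<in>J - X. be)"
    by (rule sum.cong) (use assms in auto)
  also have "J \<inter> {j. j \<in> X} = J \<inter> X" by auto
  finally show ?thesis by simp
qed

lemma irredundant:
  assumes n: "n \<ge> 3" and X: "X \<in> Con_cycle n - {{1..n}}"
  shows "polyh n (cycle_edges n) (Con_cycle n - {X}) \<noteq> polyh n (cycle_edges n) (Con_cycle n)"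
proof -
  have n0: "n > 0" using n by simp
  have X1: "X \<in> Con_cycle n" "X \<noteq> {1..n}" using X by auto
  have "\<exists>a k. 1 \<le> k \<and> k < n \<and> X = qq n ` {a..<a+k}" using X1 Con_alt[OF n0] by blast
  then obtain a k where k: "1 \<le> k" "k < n" and Xe: "X = qq n ` {a..<a+k}" by blast
  have Xsub: "X \<subseteq> {1..n}" using Xe qq_sub[OF n0] by simp
  have cX: "card X = k" using Xe qq_card[of k n a] k by simp
  define D where "D = 1 + 1 / real n"
  define al where "al = 1 - D / real k"
  define be where "be = 1 + D / real (n - k)"
  define z where "z = (\<lambda>j. if j \<in> X then al else if j \<in> {1..n} then be else 0)"
  have phiz: "phi J z = real (card (J \<inter> X)) * al + real (card (J - X)) * be" if "J \<subseteq> {1..n}" for J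
    unfolding z_def by (rule sum_z[OF that])
  have fullz: "phi {1..n} z = real n"
  proof -
    have "{1..n} \<inter> X = X" "card ({1..n} - X) = n - k" using Xsub cX card_Diff_subset[of X "{1..n}"]
      by (auto simp: finite_subset)
    then have "phi {1..n} z = real k * al + real (n - k) * be" using phiz[of "{1..n}"] cX by simp
    also have "\<dots> = real n" using k unfolding al_def be_def by (simp add: field_simps of_nat_diff)
    finally show ?thesis .
  qed
  have in1: "z \<in> polyh n (cycle_edges n) (Con_cycle n - {X})"
    unfolding polyh_def
  proof (intro CollectI conjI allI impI ballI)
    fix j assume "j \<notin> {1..n}" then show "z j = 0" using Xsub by (auto simp: z_def)
  next
    show "phi {1..n} z = real (card (cycle_edges n))" using fullz card_edges[OF n] by simp
  next
    fix J assume J: "J \<in> Con_cycle n - {X}"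
    then have Jsub: "J \<subseteq> {1..n}" using Con_sub[OF n0] by blast
    have "J = {1..n} \<or> (\<exists>b l. 1 \<le> l \<and> l < n \<and> J = qq n ` {b..<b+l})"
      using J Con_alt[OF n0] by blast
    then show "real (card (restr (cycle_edges n) J)) \<le> phi J z"
    proof
      assume "J = {1..n}"
      then show ?thesis using fullz card_restr_full[OF n] by simp
    next
      assume "\<exists>b l. 1 \<le> l \<and> l < n \<and> J = qq n ` {b..<b+l}"
      then obtain b l where l: "1 \<le> l" "l < n" and Je: "J = qq n ` {b..<b+l}" by blast
      have cJ: "card J = l" using Je qq_card[of l n b] l by simp
      have fJ: "finite J" using Jsub finite_subset by blast
      have pq: "card (J \<inter> X) + card (J - X) = l" using card_Int_Diff[OF fJ, of X] cJ by simp
      have pk: "card (J \<inter> X) \<le> k" using cX card_mono[of X "J \<inter> X"] Xsub finite_subset by auto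
      have q0: "card (J \<inter> X) < k" if "card (J - X) = 0"
      proof -
        have "J - X = {}" using that fJ by simp
        then have "J \<subset> X" using J by blast
        then have "card J < card X" using Xsub by (intro psubset_card_mono) (auto simp: finite_subset)
        then show ?thesis using cX \<open>J - X = {}\<close> by (simp add: Int_absorb2 Diff_eq_empty_iff)
      qed
      have "real (card (J \<inter> X)) * al + real (card (J - X)) * be
            \<ge> real (card (J \<inter> X)) + real (card (J - X)) - 1"
        using ineq[OF pk k q0] unfolding al_def be_def D_def by simp
      moreover have "real (card (restr (cycle_edges n) J)) = real (card (J \<inter> X)) + real (card (J - X)) - 1"
        using card_restr_int[OF n l, of b] Je pq l by (simp add: of_nat_diff)
      ultimately show ?thesis using phiz[OF Jsub] by simp
    qed
  qed
  have nin: "z \<notin> polyh n (cycle_edges n) (Con_cycle n)"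
  proof
    assume "z \<in> polyh n (cycle_edges n) (Con_cycle n)"
    moreover have "X \<in> Con_cycle n" using X by simp
    ultimately have "phi X z \<ge> real (card (restr (cycle_edges n) X))" unfolding polyh_def by blast
    moreover have "phi X z = real k * al" using phiz[OF Xsub] cX by simp
    moreover have "card (restr (cycle_edges n) X) = k - 1" using card_restr_int[OF n k, of a] Xe by simp
    moreover have "D > 1" unfolding D_def using n0 by simp
    ultimately show False using k unfolding al_def by (simp add: field_simps of_nat_diff)
  qed
  show ?thesis using in1 nin by blast
qed

lemma connected: assumes n: "n \<ge> 3" shows "connected_hypergraph n (cycle_edges n)"
  unfolding connected_hypergraph_def
proof (intro allI impI)
  fix A assume A: "A \<subseteq> {1..n} \<and> A \<noteq> {} \<and> A \<noteq> {1..n}"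
  have n0: "n > 0" using n by simp
  have "\<exists>i\<in>A. i mod n + 1 \<notin> A"
  proof (rule ccontr)
    assume "\<not> (\<exists>i\<in>A. i mod n + 1 \<notin> A)"
    then have cl: "\<And>i. i \<in> A \<Longrightarrow> i mod n + 1 \<in> A" by blast
    obtain i0 where i0: "i0 \<in> A" using A by blast
    have i0n: "i0 \<in> {1..n}" using A i0 by blast
    have Q: "qq n (i0 - 1 + t) \<in> A" for t
    proof (induction t)
      case 0 then show ?case using qq_pred[OF i0n] i0 by simp
    next
      case (Suc t)
      then have "qq n (i0 - 1 + t) mod n + 1 \<in> A" by (rule cl)
      then show ?case using qq_suc[of n "i0 - 1 + t"] by simp
    qed
    have "qq n ` {i0 - 1..<i0 - 1 + n} \<subseteq> A"
    proof
      fix v assume "v \<in> qq n ` {i0 - 1..<i0 - 1 + n}"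
      then obtain u where u: "u \<ge> i0 - 1" "v = qq n u" by auto
      then have "u = i0 - 1 + (u - (i0 - 1))" by simp
      then show "v \<in> A" using Q[of "u - (i0 - 1)"] u(2) by metis
    qed
    then have "{1..n} \<subseteq> A" using qq_full[OF n0] by simp
    then show False using A by blast
  qed
  then obtain i where i: "i \<in> A" "i mod n + 1 \<notin> A" by blast
  have iA: "i \<in> {1..n}" using A i by blast
  have s: "i mod n + 1 \<in> {1..n}" using n0 by (simp add: Suc_le_eq)
  have "ee n i \<in> cycle_edges n" unfolding cycle_edges_alt using iA by blast
  moreover have "ee n i \<inter> A \<noteq> {}" using i by (auto simp: ee_def)
  moreover have "ee n i \<inter> ({1..n} - A) \<noteq> {}" using i s by (auto simp: ee_def)
  ultimately show "\<exists>F\<in>cycle_edges n. F \<inter> A \<noteq> {} \<and> F \<inter> ({1..n} - A) \<noteq> {}" by blast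
qed

theorem mainTheorem9:
  fixes n :: nat
  assumes "n \<ge> 3"
  shows "building_closure n (cycle_edges n) = Con_cycle n
       \<and> tight n (cycle_edges n)
       \<and> nestohedron (cycle_edges n) = polyh n (cycle_edges n) (Con_cycle n)
       \<and> (\<forall>X \<in> Con_cycle n - {{1..n}}.
            polyh n (cycle_edges n) (Con_cycle n - {X}) \<noteq> nestohedron (cycle_edges n))"
proof -
  have n0: "n > 0" using assms by simp
  have cl: "building_closure n (cycle_edges n) = Con_cycle n" by (rule closure_Con[OF assms])
  have eq: "nestohedron (cycle_edges n) = polyh n (cycle_edges n) (Con_cycle n)"
  proof
    show "nestohedron (cycle_edges n) \<subseteq> polyh n (cycle_edges n) (Con_cycle n)"
    proof
      fix x assume "x \<in> nestohedron (cycle_edges n)"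
      moreover have "\<forall>F\<in>cycle_edges n. F \<subseteq> {1..n}"
        using edges_Con[OF assms] Con_sub[OF n0] by blast
      moreover have "\<forall>X\<in>Con_cycle n. finite X"
        using Con_sub[OF n0] finite_subset by blast
      ultimately show "x \<in> polyh n (cycle_edges n) (Con_cycle n)"
        using nest_sub_polyh[OF finite_edges] by blast
    qed
  next
    show "polyh n (cycle_edges n) (Con_cycle n) \<subseteq> nestohedron (cycle_edges n)"
      using polyh_sub_nest[OF assms] by blast
  qed
  have irr: "\<forall>X \<in> Con_cycle n - {{1..n}}.
      polyh n (cycle_edges n) (Con_cycle n - {X}) \<noteq> polyh n (cycle_edges n) (Con_cycle n)"
    using irredundant[OF assms] by blast
  have "tight n (cycle_edges n)" unfolding tight_def cl using connected[OF assms] irr by blast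
  then show ?thesis using cl eq irr by simp
qed


end
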